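(* Under the setting and assumptions below (those of the asymptotic risk theorem), with $\alpha_g>0$ for all $g$, the asymptotically optimal choice of regularization parameters is $\lambda_g^*=\gamma_g/\alpha_g^2$, $g=1,\dots,K$; that is, the almost-sure limit $\mathcal R(\boldsymbol\lambda)=1+\gamma f(\boldsymbol\lambda)+\sum_{j}\frac{\gamma}{\gamma_j}(\gamma_j\lambda_j-\alpha_j^2\lambda_j^2)\partial_{\lambda_j}f(\boldsymbol\lambda)$ of the risk $\mathbf R(\boldsymbol\lambda)$ is minimized over $\boldsymbol\lambda\in(0,\infty)^K$ at $\boldsymbol\lambda^*=(\lambda_1^*,\dots,\lambda_K^* )$, and the optimal limiting risk is $1+\gamma f(\lambda_1^*,\dots,\lambda_K^* )$.
   Context: Setting: sequence of problems with $n\to\infty$, $p=p(n)$ features in $K$ consecutive disjoint groups $\mathcal G_g$, $p_g=|\mathcal G_g|$. Model: independently, $w_j$ mean $0$, variance $\alpha_g^2/p_g$ for $j\in\mathcal G_g$; $x_i\sim\mathcal N(0,\boldsymbol\Sigma)$ i.i.d.; $\varepsilon_i$ mean $0$, variance $1$; $Y_i=x_i^\top\mathbf w+\varepsilon_i$. For deterministic $\boldsymbol\lambda\in(0,\infty)^K$, $\widehat{\mathbf w}(\boldsymbol\lambda)=(\mathbf X^\top\mathbf X/n+\boldsymbol\Lambda)^{-1}\mathbf X^\top\mathbf Y/n$ with $\boldsymbol\Lambda$ diagonal, entry $\lambda_g$ at $j\in\mathcal G_g$; $\mathbf R(\boldsymbol\lambda)=\mathbb E[(Y_{\mathrm{test}}-x_{\mathrm{test}}^\top\widehat{\mathbf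 w}(\boldsymbol\lambda))^2\mid\mathbf X,\mathbf Y,\mathbf w]$ for an independent fresh draw. Assumptions: $K$ fixed and $p_g/n\to\gamma_g>0$, $\gamma=\sum_g\gamma_g$; eigenvalues of $\boldsymbol\Sigma$ in $[h_1,h_2]$, fixed $h_1,h_2>0$; $(4+\eta)$-th moments of $\sqrt p\,w_j$ and $\varepsilon_i$ uniformly bounded for some $\eta>0$; each group covariance $\boldsymbol\Sigma_g$ has limiting spectral distribution $H_g$; and there are symmetric positive definite $\tilde{\boldsymbol\Sigma}_g$ ($p_g\times p_g$, eigenvalues in $[h_1,h_2]$) with $\mathrm{Rank}(\boldsymbol\Sigma^{1/2}-\mathrm{diag}(\tilde{\boldsymbol\Sigma}_1^{1/2},\dots,\tilde{\boldsymbol\Sigma}_K^{1/2}))\le r$ for fixed $r$. Here $f(\boldsymbol\lambda)\ge0$ is the unique nonnegative solution of $f=\sum_{j}\frac{\gamma_j}{\gamma}\int(\frac{\lambda_j}{t}+\frac{1}{1+\gamma f})^{-1}dH_j(t)$; under these assumptions $\mathbf R(\boldsymbol\lambda)\to\mathcal R(\boldsymbol\lambda)$ almost surely. *)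

theory Defs
  imports "HOL-Probability.Probability"
begin

text \<open>Groups are indexed by 0..<K. gam g = gamma_g, alpha g = alpha_g, H g = limiting
spectral distribution of group g, lam g = lambda_g.\<close>

definition gamma_tot :: "nat \<Rightarrow> (nat \<Rightarrow> real) \<Rightarrow> real" where
  "gamma_tot K gam = (\<Sum>g<K. gam g)"

definition fsol :: "nat \<Rightarrow> (nat \<Rightarrow> real) \<Rightarrow> (nat \<Rightarrow> real measure) \<Rightarrow> (nat \<Rightarrow> real) \<Rightarrow> real" where
  "fsol K gam H lam = (THE x. 0 \<le> x \<and>
     x = (\<Sum>j<K. gam j / gamma_tot K gam *
            (\<integral>t. inverse (lam j / t + 1 / (1 + gamma_tot K gam * x)) \<partial>(H j))))"

definition Rlim :: "nat \<Rightarrow> (nat \<Rightarrow> real) \<Rightarrow> (nat \<Rightarrow> real) \<Rightarrow> (nat \<Rightarrow> real measure) \<Rightarrow> (nat \<Rightarrow> real) \<Rightarrow> real" where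
  "Rlim K gam alpha H lam = 1 + gamma_tot K gam * fsol K gam H lam
     + (\<Sum>j<K. gamma_tot K gam / gam j * (gam j * lam j - (alpha j)^2 * (lam j)^2)
                * deriv (\<lambda>s. fsol K gam H (lam(j := s))) (lam j))"

end

theory Submission
  imports Defs
begin

lemma P1: fixes t l c h2 :: real assumes "0<t" "t\<le>h2" "0<l" "0\<le>c"
  shows "0 \<le> t/(l+c*t) \<and> t/(l+c*t) \<le> h2/l"
proof -
  have "l \<le> l + c*t" using assms by simp
  moreover have "0 < l + c*t" using assms by (simp add: add_pos_nonneg)
  ultimately have "t/(l+c*t) \<le> t/l" using assms by (intro divide_left_mono) auto
  also have "\<dots> \<le> h2/l" using assms by (simp add: divide_right_mono)
  finally show ?thesis using assms \<open>0 < l + c*t\<close> by auto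
qed
lemma P3: fixes t l c l' c' :: real assumes "l+c*t \<noteq> 0" "l'+c'*t \<noteq> 0"
  shows "c'*t/(l'+c'*t) - c*t/(l+c*t) = (c'-c)*l*(t/((l'+c'*t)*(l+c*t))) - c*(l'-l)*(t/((l'+c'*t)*(l+c*t)))"
proof -
  have "c'*t/(l'+c'*t) - c*t/(l+c*t) = (c'*t*(l+c*t) - c*t*(l'+c'*t))/((l'+c'*t)*(l+c*t))"
    using assms by (simp add: diff_frac_eq)
  also have "\<dots> = ((c'-c)*l*t - c*(l'-l)*t)/((l'+c'*t)*(l+c*t))" by (simp add: algebra_simps)
  finally show ?thesis by (simp add: diff_divide_distrib)
qed
lemma P6: fixes t l c :: real assumes "l+c*t \<noteq> 0"
  shows "c*t/(l+c*t) = c*l*(t/((l+c*t)*(l+c*t))) + c*c*(t*t/((l+c*t)*(l+c*t)))"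
proof -
  have "c*l*(t/((l+c*t)*(l+c*t))) + c*c*(t*t/((l+c*t)*(l+c*t))) = (c*t*(l+c*t))/((l+c*t)*(l+c*t))"
    by (simp add: add_divide_distrib[symmetric] algebra_simps)
  also have "\<dots> = c*t/(l+c*t)" using assms by simp
  finally show ?thesis by simp
qed

lemma P2: fixes t l c c' h2 :: real assumes "0<t" "t\<le>h2" "0<l" "0\<le>c" "0\<le>c'"
  shows "\<bar>c*t/(l+c*t) - c'*t/(l+c'*t)\<bar> \<le> h2/l*\<bar>c-c'\<bar>"
proof -
  have p: "0 < l+c*t" "0 < l+c'*t" using assms by (auto intro: add_pos_nonneg)
  have e: "c*t/(l+c*t) - c'*t/(l+c'*t) = (c*t*(l+c'*t) - c'*t*(l+c*t))/((l+c*t)*(l+c'*t))"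
    using p by (simp add: diff_frac_eq)
  have e2: "c*t*(l+c'*t) - c'*t*(l+c*t) = l*t*(c-c')" by (simp add: algebra_simps)
  have "\<bar>(l*t*(c-c'))/((l+c*t)*(l+c'*t))\<bar> = (l*t*\<bar>c-c'\<bar>)/((l+c*t)*(l+c'*t))"
    using p assms by (simp add: abs_mult)
  also have "\<dots> \<le> (l*t*\<bar>c-c'\<bar>)/(l*l)"
    apply (rule frac_le) using p assms by (auto intro!: mult_mono)
  also have "\<dots> = t*\<bar>c-c'\<bar>/l" using assms by simp
  also have "\<dots> \<le> h2*\<bar>c-c'\<bar>/l" using assms by (intro divide_right_mono mult_right_mono) auto
  finally show ?thesis unfolding e e2 by simp
qed
lemma P4: fixes t l c l' c' h2 :: real assumes "0<t" "t\<le>h2" "0<l" "0\<le>c" "0<l'" "0\<le>c'"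
  shows "0 \<le> t/((l'+c'*t)*(l+c*t)) \<and> t/((l'+c'*t)*(l+c*t)) \<le> h2/(l'*l)"
proof -
  have p: "l \<le> l+c*t" "l' \<le> l'+c'*t" "0 < l+c*t" "0 < l'+c'*t" using assms by (auto intro: add_pos_nonneg)
  have "t/((l'+c'*t)*(l+c*t)) \<le> h2/(l'*l)"
    apply (rule frac_le) using p assms by (auto intro!: mult_mono)
  then show ?thesis using assms p by auto
qed
lemma P7: fixes t l c r b g :: real assumes "0<t" "0<l" "0\<le>c" "0<r" "0<b" "0<g"
  shows "r*(b*g*t/(b*t+r*g)) \<le> b*l*l*(t/((l+c*t)*(l+c*t))) + r*g*c*c*(t*t/((l+c*t)*(l+c*t)))"
proof -
  define D where "D = l+c*t"
  have p: "0 < D" "0 < b*t+r*g" using assms unfolding D_def by (auto intro: add_pos_nonneg)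
  have sq: "0 \<le> (b*t*l - r*g*(c*t))^2" by simp
  have e1: "r*(b*g*t/(b*t+r*g)) = (b*t*(r*g))/(b*t+r*g)" by (simp add: algebra_simps)
  have e2: "b*l*l*(t/(D*D)) + r*g*c*c*(t*t/(D*D)) = (b*t*l*l + r*g*(c*t)*(c*t))/(D*D)"
    by (simp add: add_divide_distrib algebra_simps)
  have key: "(b*t*(r*g))*(D*D) \<le> (b*t*l*l + r*g*(c*t)*(c*t))*(b*t+r*g)"
  proof -
    have "(b*t*l*l + r*g*(c*t)*(c*t))*(b*t+r*g) - (b*t*(r*g))*(D*D) = (b*t*l - r*g*(c*t))^2"
      unfolding D_def by (simp add: power2_eq_square algebra_simps)
    then show ?thesis using sq by linarith
  qed
  have "(b*t*(r*g))/(b*t+r*g) \<le> (b*t*l*l + r*g*(c*t)*(c*t))/(D*D)"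
    using key p by (simp add: divide_le_eq le_divide_eq mult.commute mult.left_commute)
  then show ?thesis using e1 e2 unfolding D_def by linarith
qed
lemma P9: fixes t r r' b g :: real assumes "0<t" "0<r" "r\<le>r'" "0<b" "0<g"
  shows "b*g*t/(b*t+r'*g) \<le> b*g*t/(b*t+r*g)"
  apply (rule frac_le) using assms by (auto intro!: add_pos_pos mult_right_mono)

lemma gen5: fixes t a b :: real assumes "a \<noteq> 0" "b \<noteq> 0"
  shows "t/(b*a) - t/(a*a) = t*(a-b)/(b*a*a)"
  using assms by (simp add: field_simps)
lemma P5e: fixes t l c l' c' :: real assumes "l+c*t \<noteq> 0" "l'+c'*t \<noteq> 0"
  shows "t/((l'+c'*t)*(l+c*t)) - t/((l+c*t)*(l+c*t)) = t*((l-l') + (c-c')*t)/((l'+c'*t)*(l+c*t)*(l+c*t))"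
proof -
  have "(l+c*t) - (l'+c'*t) = (l-l') + (c-c')*t" by (simp add: algebra_simps)
  then show ?thesis using gen5[OF assms, of t] by simp
qed
lemma P5: fixes t l c l' c' h2 :: real assumes "0<t" "t\<le>h2" "0<l" "0\<le>c" "0<l'" "0\<le>c'"
  shows "\<bar>t/((l'+c'*t)*(l+c*t)) - t/((l+c*t)*(l+c*t))\<bar> \<le> h2*(\<bar>l'-l\<bar> + h2*\<bar>c'-c\<bar>)/(l'*l*l)"
proof -
  have p: "0 < l+c*t" "0 < l'+c'*t" "l \<le> l+c*t" "l' \<le> l'+c'*t" using assms by (auto intro: add_pos_nonneg)
  have e: "t/((l'+c'*t)*(l+c*t)) - t/((l+c*t)*(l+c*t)) = t*((l-l') + (c-c')*t)/((l'+c'*t)*(l+c*t)*(l+c*t))"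
    using p by (intro P5e) auto
  have n1: "\<bar>(l-l') + (c-c')*t\<bar> \<le> \<bar>l'-l\<bar> + \<bar>c'-c\<bar>*t"
  proof -
    have "\<bar>(l-l') + (c-c')*t\<bar> \<le> \<bar>l-l'\<bar> + \<bar>(c-c')*t\<bar>" by (rule abs_triangle_ineq)
    also have "\<bar>(c-c')*t\<bar> = \<bar>c'-c\<bar>*t" using assms by (simp add: abs_mult abs_minus_commute)
    finally show ?thesis by (simp add: abs_minus_commute)
  qed
  have n2: "\<bar>c'-c\<bar>*t \<le> h2*\<bar>c'-c\<bar>" using assms by (simp add: mult_right_mono mult.commute)
  have n3: "\<bar>t*((l-l') + (c-c')*t)\<bar> \<le> h2*(\<bar>l'-l\<bar> + h2*\<bar>c'-c\<bar>)"
  proof -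
    have "\<bar>t*((l-l') + (c-c')*t)\<bar> = t*\<bar>(l-l') + (c-c')*t\<bar>" using assms by (simp add: abs_mult)
    also have "\<dots> \<le> h2*(\<bar>l'-l\<bar> + h2*\<bar>c'-c\<bar>)" using n1 n2 assms
      by (intro mult_mono) auto
    finally show ?thesis .
  qed
  have "l'*l*l \<le> (l'+c'*t)*(l+c*t)*(l+c*t)" using p assms by (auto intro!: mult_mono)
  then have "\<bar>t*((l-l') + (c-c')*t)\<bar>/((l'+c'*t)*(l+c*t)*(l+c*t)) \<le> h2*(\<bar>l'-l\<bar> + h2*\<bar>c'-c\<bar>)/(l'*l*l)"
    using assms n3 by (intro frac_le) auto
  then show ?thesis unfolding e using p by (simp add: abs_mult)
qed
lemma P8: fixes t c b g :: real assumes "0<t" "0<c" "0<b" "0<g"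
  shows "(1/c)*(b*g*t/(b*t+(1/c)*g)) = g*(t/(g/b+c*t))"
  using assms by (simp add: field_simps)
lemma P10: fixes t l c :: real assumes "0<t" "0<l" "0<c"
  shows "inverse (l/t + c) = t/(l+c*t)"
  using assms by (simp add: field_simps inverse_eq_divide)
lemma absle: fixes x B :: real shows "0 \<le> x \<and> x \<le> B \<Longrightarrow> \<bar>x\<bar> \<le> B" by simp
lemma PB: fixes t l c h2 :: real assumes "0<t" "t\<le>h2" "0<l" "0\<le>c"
  shows "\<bar>t*t/((l+c*t)*(l+c*t))\<bar> \<le> h2*h2/(l*l)"
proof -
  have p: "0 < l+c*t" "l \<le> l+c*t" using assms by (auto intro: add_pos_nonneg)
  have "t*t/((l+c*t)*(l+c*t)) \<le> h2*h2/(l*l)"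
    apply (rule frac_le) using p assms by (auto intro!: mult_mono)
  then show ?thesis using p assms by simp
qed
lemma PN: fixes t b g r h1 h2 :: real assumes "h1\<le>t" "t\<le>h2" "0<h1" "0<b" "0<g" "0<r"
  shows "\<bar>b*g*t/(b*t+r*g)\<bar> \<le> b*g*h2/(b*h1)"
proof -
  have "b*g*t/(b*t+r*g) \<le> b*g*h2/(b*h1)"
    apply (rule frac_le) using assms by (auto intro!: mult_mono add_increasing2)
  moreover have "0 \<le> b*g*t/(b*t+r*g)" using assms by simp
  ultimately show ?thesis by (simp only: abs_of_nonneg)
qed
lemma PTm: fixes t l c c' :: real assumes "0<t" "0<l" "0\<le>c" "c\<le>c'"
  shows "c*t/(l+c*t) \<le> c'*t/(l+c'*t)"
proof -
  have p: "0 < l+c*t" "0 < l+c'*t" using assms by (auto intro: add_pos_nonneg)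
  have "c*t*(l+c'*t) \<le> c'*t*(l+c*t)"
  proof -
    have "c*t*(l+c'*t) - c'*t*(l+c*t) = (c-c')*t*l" by (simp add: algebra_simps)
    moreover have "(c-c')*t*l \<le> 0" using assms by (simp add: mult_nonpos_nonneg)
    ultimately show ?thesis by linarith
  qed
  then show ?thesis using p by (simp add: divide_simps)
qed

locale hm =
  fixes M :: "real measure" and h1 h2 :: real
  assumes ps: "prob_space M" and sM: "sets M = sets borel"
    and m1: "measure M {h1..h2} = 1" and h1pos: "0 < h1" and h12: "h1 \<le> h2"
begin

lemma AEI: "AE t in M. t \<in> {h1..h2}"
  using prob_space.AE_prob_1[OF ps] m1 by blast

lemma meas: "f \<in> borel_measurable borel \<Longrightarrow> f \<in> borel_measurable M"
  using measurable_cong_sets[OF sM refl] by blast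

lemma intb:
  fixes f :: "real \<Rightarrow> real"
  assumes "f \<in> borel_measurable borel" "\<forall>t\<in>{h1..h2}. \<bar>f t\<bar> \<le> B"
  shows "integrable M f"
proof -
  interpret prob_space M by (rule ps)
  show ?thesis
    apply (rule integrable_const_bound[where B=B])
    using AEI assms(2) apply (auto elim!: AE_mp)[1]
    using meas[OF assms(1)] .
qed

lemma imono:
  fixes f g :: "real \<Rightarrow> real"
  assumes "integrable M f" "integrable M g" "\<forall>t\<in>{h1..h2}. f t \<le> g t"
  shows "integral\<^sup>L M f \<le> integral\<^sup>L M g"
  apply (rule integral_mono_AE[OF assms(1,2)])
  using AEI assms(3) by (auto elim!: AE_mp)

lemma iconst: "integral\<^sup>L M (\<lambda>t. c) = (c::real)"
  using prob_space.prob_space[OF ps] by simp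

lemma iconst_int: "integrable M (\<lambda>t. c::real)"
  using prob_space.finite_measure[OF ps] finite_measure.integrable_const by blast

lemma ibound:
  fixes f :: "real \<Rightarrow> real"
  assumes "integrable M f" "\<forall>t\<in>{h1..h2}. \<bar>f t\<bar> \<le> B"
  shows "\<bar>integral\<^sup>L M f\<bar> \<le> B"
proof -
  have "integral\<^sup>L M f \<le> integral\<^sup>L M (\<lambda>t. B)"
    by (rule imono[OF assms(1) iconst_int]) (use assms(2) in auto)
  moreover have "integral\<^sup>L M (\<lambda>t. -B) \<le> integral\<^sup>L M f"
    by (rule imono[OF iconst_int assms(1)]) (use assms(2) in auto)
  ultimately show ?thesis unfolding iconst by linarith
qed

lemma icong:
  fixes f g :: "real \<Rightarrow> real"
  assumes "\<forall>t\<in>{h1..h2}. f t = g t" "f \<in> borel_measurable borel" "g \<in> borel_measurable borel"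
  shows "integral\<^sup>L M f = integral\<^sup>L M g"
  apply (rule integral_cong_AE)
  using meas[OF assms(2)] meas[OF assms(3)] AEI assms(1) by (auto elim!: AE_mp)

end

definition iS :: "real measure \<Rightarrow> real \<Rightarrow> real \<Rightarrow> real" where
  "iS M l c = (\<integral>t. t/(l+c*t) \<partial>M)"
definition iT :: "real measure \<Rightarrow> real \<Rightarrow> real \<Rightarrow> real" where
  "iT M l c = (\<integral>t. c*t/(l+c*t) \<partial>M)"
definition iI :: "real measure \<Rightarrow> real \<Rightarrow> real \<Rightarrow> real \<Rightarrow> real \<Rightarrow> real" where
  "iI M l' c' l c = (\<integral>t. t/((l'+c'*t)*(l+c*t)) \<partial>M)"
definition iB :: "real measure \<Rightarrow> real \<Rightarrow> real \<Rightarrow> real" where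
  "iB M l c = (\<integral>t. t*t/((l+c*t)*(l+c*t)) \<partial>M)"
definition iN :: "real measure \<Rightarrow> real \<Rightarrow> real \<Rightarrow> real \<Rightarrow> real" where
  "iN M b g r = (\<integral>t. b*g*t/(b*t+r*g) \<partial>M)"

lemma iT_S: "iT M l c = c * iS M l c"
  unfolding iT_def iS_def
  by (simp add: integral_mult_right_zero[symmetric] times_divide_eq_right del: integral_mult_right_zero)

context hm
begin

lemma hpos: "t \<in> {h1..h2} \<Longrightarrow> 0 < t" using h1pos by auto

lemma intS: "0<l \<Longrightarrow> 0\<le>c \<Longrightarrow> integrable M (\<lambda>t. t/(l+c*t))"
proof (rule intb[where B="h2/l"])
  assume a: "0<l" "0\<le>c"
  show "(\<lambda>t. t/(l+c*t)) \<in> borel_measurable borel" by measurable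
  show "\<forall>t\<in>{h1..h2}. \<bar>t/(l+c*t)\<bar> \<le> h2/l"
  proof
    fix t assume t: "t \<in> {h1..h2}"
    show "\<bar>t/(l+c*t)\<bar> \<le> h2/l" by (rule absle, rule P1) (use t a hpos in auto)
  qed
qed

lemma intI: "0<l \<Longrightarrow> 0\<le>c \<Longrightarrow> 0<l' \<Longrightarrow> 0\<le>c' \<Longrightarrow> integrable M (\<lambda>t. t/((l'+c'*t)*(l+c*t)))"
proof (rule intb[where B="h2/(l'*l)"])
  assume a: "0<l" "0\<le>c" "0<l'" "0\<le>c'"
  show "(\<lambda>t. t/((l'+c'*t)*(l+c*t))) \<in> borel_measurable borel" by measurable
  show "\<forall>t\<in>{h1..h2}. \<bar>t/((l'+c'*t)*(l+c*t))\<bar> \<le> h2/(l'*l)"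
  proof
    fix t assume t: "t \<in> {h1..h2}"
    show "\<bar>t/((l'+c'*t)*(l+c*t))\<bar> \<le> h2/(l'*l)" by (rule absle, rule P4) (use t a hpos in auto)
  qed
qed

lemma intB: "0<l \<Longrightarrow> 0\<le>c \<Longrightarrow> integrable M (\<lambda>t. t*t/((l+c*t)*(l+c*t)))"
proof (rule intb[where B="h2*h2/(l*l)"])
  assume a: "0<l" "0\<le>c"
  show "(\<lambda>t. t*t/((l+c*t)*(l+c*t))) \<in> borel_measurable borel" by measurable
  show "\<forall>t\<in>{h1..h2}. \<bar>t*t/((l+c*t)*(l+c*t))\<bar> \<le> h2*h2/(l*l)"
  proof
    fix t assume t: "t \<in> {h1..h2}"
    show "\<bar>t*t/((l+c*t)*(l+c*t))\<bar> \<le> h2*h2/(l*l)" by (rule PB) (use t a hpos in auto)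
  qed
qed

lemma intN: "0<b \<Longrightarrow> 0<g \<Longrightarrow> 0<r \<Longrightarrow> integrable M (\<lambda>t. b*g*t/(b*t+r*g))"
proof (rule intb[where B="b*g*h2/(b*h1)"])
  assume a: "0<b" "0<g" "0<r"
  show "(\<lambda>t. b*g*t/(b*t+r*g)) \<in> borel_measurable borel" by measurable
  show "\<forall>t\<in>{h1..h2}. \<bar>b*g*t/(b*t+r*g)\<bar> \<le> b*g*h2/(b*h1)"
  proof
    fix t assume t: "t \<in> {h1..h2}"
    show "\<bar>b*g*t/(b*t+r*g)\<bar> \<le> b*g*h2/(b*h1)" by (rule PN) (use t a h1pos in auto)
  qed
qed

lemma intT: assumes "0<l" "0\<le>c" shows "integrable M (\<lambda>t. c*t/(l+c*t))"
proof -
  have "integrable M (\<lambda>t. c*(t/(l+c*t)))" using intS[OF assms] by (rule integrable_mult_right)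
  then show ?thesis by simp
qed

lemma S_T: "iT M l c = c * iS M l c"
  unfolding iT_def iS_def
  by (simp add: integral_mult_right_zero[symmetric] times_divide_eq_right del: integral_mult_right_zero)

lemma T_lip: assumes "0<l" "0\<le>c" "0\<le>c'"
  shows "\<bar>iT M l c - iT M l c'\<bar> \<le> h2/l*\<bar>c-c'\<bar>"
proof -
  have "iT M l c - iT M l c' = (\<integral>t. c*t/(l+c*t) - c'*t/(l+c'*t) \<partial>M)"
    unfolding iT_def by (intro Bochner_Integration.integral_diff[symmetric] intT) (use assms in auto)
  also have "\<bar>\<dots>\<bar> \<le> h2/l*\<bar>c-c'\<bar>"
  proof (rule ibound)
    show "integrable M (\<lambda>t. c*t/(l+c*t) - c'*t/(l+c'*t))" using intT assms by auto
    show "\<forall>t\<in>{h1..h2}. \<bar>c*t/(l+c*t) - c'*t/(l+c'*t)\<bar> \<le> h2/l*\<bar>c-c'\<bar>"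
      using P2 hpos assms by auto
  qed
  finally show ?thesis .
qed

lemma T_mono: assumes "0<l" "0\<le>c" "c\<le>c'" shows "iT M l c \<le> iT M l c'"
  unfolding iT_def apply (rule imono) using intT assms PTm hpos by auto

lemma T_nonneg: assumes "0<l" "0\<le>c" shows "0 \<le> iT M l c"
  using T_mono[OF assms(1) order_refl assms(2)] by (simp add: iT_def)

lemma T_diff: assumes "0<l" "0\<le>c" "0<l'" "0\<le>c'"
  shows "iT M l' c' - iT M l c = (c'-c)*l*iI M l' c' l c - c*(l'-l)*iI M l' c' l c"
proof -
  have "iT M l' c' - iT M l c = (\<integral>t. c'*t/(l'+c'*t) - c*t/(l+c*t) \<partial>M)"
    unfolding iT_def by (intro Bochner_Integration.integral_diff[symmetric] intT) (use assms in auto)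
  also have "\<dots> = (\<integral>t. (c'-c)*l*(t/((l'+c'*t)*(l+c*t))) - c*(l'-l)*(t/((l'+c'*t)*(l+c*t))) \<partial>M)"
  proof (rule icong)
    show "\<forall>t\<in>{h1..h2}. c'*t/(l'+c'*t) - c*t/(l+c*t) = (c'-c)*l*(t/((l'+c'*t)*(l+c*t))) - c*(l'-l)*(t/((l'+c'*t)*(l+c*t)))"
    proof
      fix t assume t: "t \<in> {h1..h2}"
      have "0 < l+c*t" "0 < l'+c'*t" using assms hpos[OF t] by (auto intro: add_pos_nonneg)
      then show "c'*t/(l'+c'*t) - c*t/(l+c*t) = (c'-c)*l*(t/((l'+c'*t)*(l+c*t))) - c*(l'-l)*(t/((l'+c'*t)*(l+c*t)))"
        by (intro P3) auto
    qed
  qed measurable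
  also have "\<dots> = (c'-c)*l*iI M l' c' l c - c*(l'-l)*iI M l' c' l c"
    unfolding iI_def using intI[OF assms(1,2,3,4)]
    by (simp only: Bochner_Integration.integral_diff[OF integrable_mult_right integrable_mult_right] integral_mult_right_zero)
  finally show ?thesis .
qed

lemma I_bnd: assumes "0<l" "0\<le>c" "0<l'" "0\<le>c'"
  shows "0 \<le> iI M l' c' l c \<and> iI M l' c' l c \<le> h2/(l'*l)"
proof -
  have i: "integrable M (\<lambda>t. t/((l'+c'*t)*(l+c*t)))" using intI assms by auto
  have pw: "\<forall>t\<in>{h1..h2}. 0 \<le> t/((l'+c'*t)*(l+c*t)) \<and> t/((l'+c'*t)*(l+c*t)) \<le> h2/(l'*l)"
  proof
    fix t assume t: "t \<in> {h1..h2}"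
    show "0 \<le> t/((l'+c'*t)*(l+c*t)) \<and> t/((l'+c'*t)*(l+c*t)) \<le> h2/(l'*l)"
      by (rule P4[OF hpos[OF t] _ assms]) (use t in auto)
  qed
  have "iI M l' c' l c \<le> integral\<^sup>L M (\<lambda>t. h2/(l'*l))" unfolding iI_def
    by (rule imono[OF i iconst_int]) (use pw in auto)
  moreover have "integral\<^sup>L M (\<lambda>t. 0) \<le> iI M l' c' l c" unfolding iI_def
    by (rule imono[OF iconst_int i]) (use pw in auto)
  ultimately show ?thesis unfolding iconst by simp
qed

lemma I_conv: assumes "0<l" "0\<le>c" "0<l'" "0\<le>c'"
  shows "\<bar>iI M l' c' l c - iI M l c l c\<bar> \<le> h2*(\<bar>l'-l\<bar> + h2*\<bar>c'-c\<bar>)/(l'*l*l)"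
proof -
  have "iI M l' c' l c - iI M l c l c = (\<integral>t. t/((l'+c'*t)*(l+c*t)) - t/((l+c*t)*(l+c*t)) \<partial>M)"
    unfolding iI_def by (intro Bochner_Integration.integral_diff[symmetric] intI) (use assms in auto)
  also have "\<bar>\<dots>\<bar> \<le> h2*(\<bar>l'-l\<bar> + h2*\<bar>c'-c\<bar>)/(l'*l*l)"
  proof (rule ibound)
    show "integrable M (\<lambda>t. t/((l'+c'*t)*(l+c*t)) - t/((l+c*t)*(l+c*t)))" using intI assms by auto
    show "\<forall>t\<in>{h1..h2}. \<bar>t/((l'+c'*t)*(l+c*t)) - t/((l+c*t)*(l+c*t))\<bar> \<le> h2*(\<bar>l'-l\<bar> + h2*\<bar>c'-c\<bar>)/(l'*l*l)"
      using P5 hpos assms by auto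
  qed
  finally show ?thesis .
qed

lemma T_dec: assumes "0<l" "0\<le>c"
  shows "iT M l c = c*l*iI M l c l c + c*c*iB M l c"
proof -
  have "iT M l c = (\<integral>t. c*l*(t/((l+c*t)*(l+c*t))) + c*c*(t*t/((l+c*t)*(l+c*t))) \<partial>M)"
    unfolding iT_def
  proof (rule icong)
    show "\<forall>t\<in>{h1..h2}. c*t/(l+c*t) = c*l*(t/((l+c*t)*(l+c*t))) + c*c*(t*t/((l+c*t)*(l+c*t)))"
    proof
      fix t assume t: "t \<in> {h1..h2}"
      have "0 < l+c*t" using assms hpos[OF t] by (auto intro: add_pos_nonneg)
      then show "c*t/(l+c*t) = c*l*(t/((l+c*t)*(l+c*t))) + c*c*(t*t/((l+c*t)*(l+c*t)))"
        by (intro P6) auto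
    qed
  qed measurable
  also have "\<dots> = c*l*iI M l c l c + c*c*iB M l c"
    unfolding iI_def iB_def using intI[OF assms assms] intB[OF assms]
    by (simp only: Bochner_Integration.integral_add[OF integrable_mult_right integrable_mult_right] integral_mult_right_zero)
  finally show ?thesis .
qed

lemma N_ineq: assumes "0<l" "0\<le>c" "0<r" "0<b" "0<g"
  shows "r * iN M b g r \<le> b*l*l*iI M l c l c + r*g*c*c*iB M l c"
proof -
  have "r * iN M b g r = (\<integral>t. r*(b*g*t/(b*t+r*g)) \<partial>M)" unfolding iN_def by (rule integral_mult_right_zero[symmetric])
  also have "\<dots> \<le> (\<integral>t. b*l*l*(t/((l+c*t)*(l+c*t))) + r*g*c*c*(t*t/((l+c*t)*(l+c*t))) \<partial>M)"
    apply (rule imono) using integrable_mult_right[OF intN[OF assms(4,5,3)]]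
      Bochner_Integration.integrable_add[OF integrable_mult_right[OF intI[OF assms(1,2,1,2)]] integrable_mult_right[OF intB[OF assms(1,2)]]]
    using P7 hpos assms by auto
  also have "\<dots> = b*l*l*iI M l c l c + r*g*c*c*iB M l c"
    unfolding iI_def iB_def using intI[OF assms(1,2,1,2)] intB[OF assms(1,2)]
    by (simp only: Bochner_Integration.integral_add[OF integrable_mult_right integrable_mult_right] integral_mult_right_zero)
  finally show ?thesis .
qed

lemma N_star: assumes "0<c" "0<b" "0<g"
  shows "(1/c) * iN M b g (1/c) = g * iS M (g/b) c"
proof -
  have "(1/c) * iN M b g (1/c) = (\<integral>t. (1/c)*(b*g*t/(b*t+(1/c)*g)) \<partial>M)" unfolding iN_def by (rule integral_mult_right_zero[symmetric])
  also have "\<dots> = (\<integral>t. g*(t/(g/b+c*t)) \<partial>M)"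
    by (rule icong) (use P8 hpos assms in auto)
  also have "\<dots> = g * iS M (g/b) c" unfolding iS_def by (rule integral_mult_right_zero)
  finally show ?thesis .
qed

lemma N_mono: assumes "0<r" "r\<le>r'" "0<b" "0<g" shows "iN M b g r' \<le> iN M b g r"
  unfolding iN_def apply (rule imono) using intN assms P9 hpos by auto

lemma fsol_int: assumes "0<l" "0<c"
  shows "(\<integral>t. inverse (l/t + c) \<partial>M) = iS M l c"
  unfolding iS_def by (rule icong) (use P10 hpos assms in auto)

end

definition Tsum :: "nat \<Rightarrow> (nat \<Rightarrow> real) \<Rightarrow> (nat \<Rightarrow> real measure) \<Rightarrow> (nat \<Rightarrow> real) \<Rightarrow> real \<Rightarrow> real" where
  "Tsum K gam H lam c = (\<Sum>i<K. gam i * iT (H i) (lam i) c)"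
definition croot :: "nat \<Rightarrow> (nat \<Rightarrow> real) \<Rightarrow> (nat \<Rightarrow> real measure) \<Rightarrow> (nat \<Rightarrow> real) \<Rightarrow> real" where
  "croot K gam H lam = (THE c. 0 < c \<and> c \<le> 1 \<and> 1 - c = Tsum K gam H lam c)"

locale setting =
  fixes K :: nat and gam :: "nat \<Rightarrow> real" and H :: "nat \<Rightarrow> real measure" and h1 h2 :: real
  assumes K1: "K \<ge> 1" and gpos: "\<forall>g<K. gam g > 0"
    and h1pos: "0 < h1" and h12: "h1 \<le> h2"
    and psH: "\<forall>g<K. prob_space (H g)"
    and sH: "\<forall>g<K. sets (H g) = sets borel"
    and mH: "\<forall>g<K. measure (H g) {h1..h2} = 1"
begin

lemma hmi: "i < K \<Longrightarrow> hm (H i) h1 h2"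
  unfolding hm_def using psH sH mH h1pos h12 by auto

abbreviation "G \<equiv> gamma_tot K gam"

lemma Gpos: "0 < G"
proof -
  have "0 < gam 0" using gpos K1 by auto
  have "gam 0 \<le> (\<Sum>g<K. gam g)"
    by (rule member_le_sum) (use gpos K1 in \<open>auto intro: less_imp_le\<close>)
  then show ?thesis unfolding gamma_tot_def using \<open>0 < gam 0\<close> by linarith
qed

definition "pos lam \<longleftrightarrow> (\<forall>i<K. 0 < lam i)"

lemma T_cont: assumes "i<K" "0<l" shows "continuous_on {0..1} (\<lambda>c. iT (H i) l c)"
proof (rule lipschitz_on_continuous_on)
  show "(h2/l)-lipschitz_on {0..1} (\<lambda>c. iT (H i) l c)"
  proof (rule lipschitz_onI)
    fix x y :: real assume "x \<in> {0..1}" "y \<in> {0..1}"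
    then show "dist (iT (H i) l x) (iT (H i) l y) \<le> h2/l * dist x y"
      using hm.T_lip[OF hmi[OF assms(1)] assms(2)] by (simp add: dist_real_def)
  qed (use assms h1pos h12 in simp)
qed

lemma Tsum_cont: "pos lam \<Longrightarrow> continuous_on {0..1} (\<lambda>c. Tsum K gam H lam c)"
  unfolding Tsum_def pos_def by (intro continuous_intros T_cont) auto

lemma Tsum_mono: "pos lam \<Longrightarrow> 0 \<le> c \<Longrightarrow> c \<le> c' \<Longrightarrow> Tsum K gam H lam c \<le> Tsum K gam H lam c'"
  unfolding Tsum_def pos_def
  by (intro sum_mono mult_left_mono hm.T_mono[OF hmi]) (use gpos in \<open>auto intro: less_imp_le\<close>)

lemma Tsum0: "Tsum K gam H lam 0 = 0"
  unfolding Tsum_def iT_def by simp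

lemma root_ex: assumes "pos lam" shows "\<exists>c. 0 < c \<and> c \<le> 1 \<and> 1 - c = Tsum K gam H lam c"
proof -
  have "\<exists>c. 0 \<le> c \<and> c \<le> 1 \<and> c + Tsum K gam H lam c = 1"
  proof (rule IVT')
    show "0 + Tsum K gam H lam 0 \<le> 1" by (simp add: Tsum0)
    show "1 \<le> 1 + Tsum K gam H lam 1" using Tsum_mono[OF assms, of 0 1] by (simp add: Tsum0)
    show "continuous_on {0..1} (\<lambda>c. c + Tsum K gam H lam c)"
      by (intro continuous_intros Tsum_cont assms)
  qed simp
  then obtain c where c: "0 \<le> c" "c \<le> 1" "c + Tsum K gam H lam c = 1" by blast
  have "c \<noteq> 0" using c(3) by (auto simp: Tsum0)
  then show ?thesis using c by (intro exI[of _ c]) auto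
qed

lemma root_uniq: assumes "pos lam"
  and "0 < c1" "1 - c1 = Tsum K gam H lam c1" and "0 < c2" "1 - c2 = Tsum K gam H lam c2"
  shows "c1 = c2"
proof (rule ccontr)
  assume "c1 \<noteq> c2"
  then consider "c1 < c2" | "c2 < c1" by linarith
  then show False
  proof cases
    case 1 then show False using Tsum_mono[OF assms(1), of c1 c2] assms by auto
  next
    case 2 then show False using Tsum_mono[OF assms(1), of c2 c1] assms by auto
  qed
qed

lemma croot: assumes "pos lam"
  shows "0 < croot K gam H lam \<and> croot K gam H lam \<le> 1 \<and> 1 - croot K gam H lam = Tsum K gam H lam (croot K gam H lam)"
proof -
  obtain c where c: "0 < c \<and> c \<le> 1 \<and> 1 - c = Tsum K gam H lam c" using root_ex[OF assms] by blast
  have "croot K gam H lam = c" unfolding croot_def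
    by (rule the_equality) (use c root_uniq[OF assms] in auto)
  then show ?thesis using c by simp
qed

lemma croot_uniq: assumes "pos lam" "0 < c" "1 - c = Tsum K gam H lam c"
  shows "croot K gam H lam = c"
  using croot[OF assms(1)] root_uniq[OF assms(1)] assms by metis

lemma Tsum_S: "Tsum K gam H lam c = c * (\<Sum>i<K. gam i * iS (H i) (lam i) c)"
  unfolding Tsum_def by (simp add: iT_S sum_distrib_left algebra_simps)

lemma fsol_eq: assumes "pos lam"
  shows "fsol K gam H lam = (1 / croot K gam H lam - 1) / G"
proof -
  define c0 where "c0 = croot K gam H lam"
  have c0: "0 < c0" "c0 \<le> 1" "1 - c0 = Tsum K gam H lam c0" using croot[OF assms] c0_def by auto
  have G: "0 < G" by (rule Gpos)
  have intg: "\<And>x. 0 \<le> x \<Longrightarrow> (\<Sum>j<K. gam j / G * (\<integral>t. inverse (lam j / t + 1 / (1 + G * x)) \<partial>(H j)))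
      = (\<Sum>j<K. gam j * iS (H j) (lam j) (1 / (1 + G * x))) / G"
  proof -
    fix x :: real assume x: "0 \<le> x"
    have "0 < 1 + G*x" using G x by (simp add: add_pos_nonneg)
    then have "0 < 1/(1+G*x)" by simp
    then have "\<And>j. j < K \<Longrightarrow> (\<integral>t. inverse (lam j / t + 1 / (1 + G * x)) \<partial>(H j)) = iS (H j) (lam j) (1 / (1 + G * x))"
      using hm.fsol_int[OF hmi] assms unfolding pos_def by auto
    then show "?thesis x" by (simp add: sum_divide_distrib)
  qed
  show ?thesis unfolding fsol_def
  proof (rule the_equality)
    define x0 where "x0 = (1 / c0 - 1) / G"
    have x0: "0 \<le> x0" unfolding x0_def using c0 G by (simp add: divide_simps)
    have cx: "1 / (1 + G * x0) = c0" unfolding x0_def using G c0 by (simp add: divide_simps)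
    have e1: "(\<Sum>j<K. gam j * iS (H j) (lam j) c0) = (1 - c0)/c0"
      using c0 Tsum_S[of lam c0] by (simp add: divide_simps)
    have e2: "(1 - c0)/c0 = 1/c0 - 1" using c0(1) by (simp add: diff_divide_distrib)
    have "(\<Sum>j<K. gam j / G * (\<integral>t. inverse (lam j / t + 1 / (1 + G * x0)) \<partial>(H j)))
        = (\<Sum>j<K. gam j * iS (H j) (lam j) (1 / (1 + G * x0))) / G" by (rule intg[OF x0])
    also have "\<dots> = x0" unfolding cx e1 e2 by (simp add: x0_def)
    finally have "(\<Sum>j<K. gam j / G * (\<integral>t. inverse (lam j / t + 1 / (1 + G * x0)) \<partial>(H j))) = x0" .
    then show "0 \<le> (1 / croot K gam H lam - 1) / G \<and> (1 / croot K gam H lam - 1) / G =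
      (\<Sum>j<K. gam j / G * (\<integral>t. inverse (lam j / t + 1 / (1 + G * ((1 / croot K gam H lam - 1) / G))) \<partial>(H j)))"
      using x0 unfolding x0_def c0_def[symmetric] by simp
  next
    fix x assume hx: "0 \<le> x \<and> x = (\<Sum>j<K. gam j / G * (\<integral>t. inverse (lam j / t + 1 / (1 + G * x)) \<partial>(H j)))"
    define c where "c = 1 / (1 + G * x)"
    have pc: "0 < 1 + G*x" using G hx by (simp add: add_pos_nonneg)
    have cpos: "0 < c" unfolding c_def using pc by simp
    have x0': "0 \<le> x" and x1: "x = (\<Sum>j<K. gam j / G * (\<integral>t. inverse (lam j / t + 1 / (1 + G * x)) \<partial>(H j)))"
      using hx by blast+
    have hx2: "x = (\<Sum>j<K. gam j * iS (H j) (lam j) c) / G"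
      unfolding c_def by (rule trans[OF x1 intg[OF x0']])
    have "x * G = (\<Sum>j<K. gam j * iS (H j) (lam j) c)" using G by (subst hx2) simp
    then have "Tsum K gam H lam c = c * (x * G)" using Tsum_S by simp
    moreover have "1 - c = c * (x * G)" unfolding c_def using pc by (simp add: divide_simps)
    ultimately have "croot K gam H lam = c" using croot_uniq[OF assms cpos] by simp
    then have "1 / croot K gam H lam = 1 + G*x" unfolding c_def by simp
    then show "x = (1 / croot K gam H lam - 1) / G" using G by simp
  qed
qed

end

context setting
begin

lemma pos_upd: "pos lam \<Longrightarrow> 0 < s' \<Longrightarrow> pos (lam(j:=s'))"
  unfolding pos_def by auto

lemma diffid: assumes lp: "pos lam" and j: "j<K" and s': "0<s'"
  shows "(croot K gam H (lam(j:=s')) - croot K gam H lam) *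
     (1 + (\<Sum>i<K. gam i * lam i * iI (H i) ((lam(j:=s')) i) (croot K gam H (lam(j:=s'))) (lam i) (croot K gam H lam)))
   = (s' - lam j) * croot K gam H lam * gam j * iI (H j) s' (croot K gam H (lam(j:=s'))) (lam j) (croot K gam H lam)"
proof -
  define lam' where "lam' = lam(j:=s')"
  define c where "c = croot K gam H lam"
  define c' where "c' = croot K gam H lam'"
  define I where "I i = iI (H i) (lam' i) c' (lam i) c" for i
  have lp': "pos lam'" unfolding lam'_def using pos_upd[OF lp s'] .
  have cc: "0 < c" "c \<le> 1" "1 - c = Tsum K gam H lam c" using croot[OF lp] unfolding c_def by auto
  have cc': "0 < c'" "c' \<le> 1" "1 - c' = Tsum K gam H lam' c'" using croot[OF lp'] unfolding c'_def by auto
  have "Tsum K gam H lam' c' - Tsum K gam H lam c = (\<Sum>i<K. gam i * (iT (H i) (lam' i) c' - iT (H i) (lam i) c))"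
    unfolding Tsum_def by (simp add: sum_subtractf right_diff_distrib)
  also have "\<dots> = (\<Sum>i<K. (c'-c) * (gam i * lam i * I i) - c * (gam i * (lam' i - lam i) * I i))"
  proof (rule sum.cong)
    fix i assume "i \<in> {..<K}"
    then have "i < K" by simp
    then have e: "iT (H i) (lam' i) c' - iT (H i) (lam i) c = (c'-c)*lam i*I i - c*(lam' i - lam i)*I i"
      unfolding I_def using hm.T_diff[OF hmi] lp lp' cc cc' unfolding pos_def by auto
    show "gam i * (iT (H i) (lam' i) c' - iT (H i) (lam i) c) = (c'-c) * (gam i * lam i * I i) - c * (gam i * (lam' i - lam i) * I i)"
      unfolding e by (simp add: algebra_simps)
  qed simp
  also have "\<dots> = (c'-c) * (\<Sum>i<K. gam i * lam i * I i) - c * (\<Sum>i<K. gam i * (lam' i - lam i) * I i)"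
    by (simp add: sum_subtractf sum_distrib_left)
  also have "(\<Sum>i<K. gam i * (lam' i - lam i) * I i) = gam j * (s' - lam j) * I j"
  proof -
    have "(\<Sum>i<K. gam i * (lam' i - lam i) * I i) = gam j * (lam' j - lam j) * I j + (\<Sum>i\<in>{..<K}-{j}. gam i * (lam' i - lam i) * I i)"
      using j by (subst sum.remove[of _ j]) auto
    also have "(\<Sum>i\<in>{..<K}-{j}. gam i * (lam' i - lam i) * I i) = 0"
      by (rule sum.neutral) (auto simp: lam'_def)
    finally show ?thesis by (simp add: lam'_def)
  qed
  finally have "Tsum K gam H lam' c' - Tsum K gam H lam c = (c'-c) * (\<Sum>i<K. gam i * lam i * I i) - c * (gam j * (s' - lam j) * I j)" .
  then have "(c'-c) * (1 + (\<Sum>i<K. gam i * lam i * I i)) = (s' - lam j) * c * gam j * I j"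
    using cc(3) cc'(3) by (simp add: algebra_simps)
  then show ?thesis unfolding I_def c_def c'_def lam'_def by simp
qed

end

lemma alg1: fixes a b G X d :: real assumes "a\<noteq>0" "b\<noteq>0" "G\<noteq>0" "X\<noteq>0" "d\<noteq>0"
  shows "((1/a-1)/G - (1/b-1)/G)/d = - ((a-b)*X)/(G*b*a*X*d)"
  using assms by (simp add: field_simps)
lemma alg2: fixes a c G X d g i :: real assumes "a\<noteq>0" "c\<noteq>0" "G\<noteq>0" "X\<noteq>0" "d\<noteq>0"
  shows "- (d*c*g*i)/(G*c*a*X*d) = - g*i/(G*a*X)"
  using assms by (simp add: field_simps)

context setting
begin

lemma lamconv: "((\<lambda>s'. (lam(j:=s')) i) \<longlongrightarrow> lam i) (at (lam j))"
  by (cases "i = j") auto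

lemma deriv_fsol: assumes lp: "pos lam" and j: "j<K"
  shows "deriv (\<lambda>s. fsol K gam H (lam(j:=s))) (lam j) =
    - gam j * iI (H j) (lam j) (croot K gam H lam) (lam j) (croot K gam H lam) /
      (G * croot K gam H lam * (1 + (\<Sum>i<K. gam i * lam i * iI (H i) (lam i) (croot K gam H lam) (lam i) (croot K gam H lam))))"
proof -
  define s0 where "s0 = lam j"
  define c where "c = croot K gam H lam"
  define cf where "cf s' = croot K gam H (lam(j:=s'))" for s'
  define I where "I s' i = iI (H i) ((lam(j:=s')) i) (cf s') (lam i) c" for s' i
  define A where "A i = iI (H i) (lam i) c (lam i) c" for i
  define E where "E = 1 + (\<Sum>i<K. gam i * lam i * A i)"
  define Q where "Q s' = - gam j * I s' j / (G * cf s' * (1 + (\<Sum>i<K. gam i * lam i * I s' i)))" for s'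
  have gj: "0 < gam j" using gpos j by auto
  have s0: "0 < s0" using lp j unfolding s0_def pos_def by auto
  have cc: "0 < c" "c \<le> 1" using croot[OF lp] unfolding c_def by auto
  have ccf: "0 < s' \<Longrightarrow> 0 < cf s' \<and> cf s' \<le> 1" for s'
    using croot[OF pos_upd[OF lp]] unfolding cf_def by auto
  have lpi: "i < K \<Longrightarrow> 0 < lam i" for i using lp unfolding pos_def by auto
  have lpi': "i < K \<Longrightarrow> 0 < s' \<Longrightarrow> 0 < (lam(j:=s')) i" for i s' using lpi by auto
  have Ibnd: "0 \<le> I s' i \<and> I s' i \<le> h2/((lam(j:=s')) i * lam i)" if i: "i < K" and sp: "0 < s'" for i s'
  proof -
    have "0 \<le> cf s'" using ccf[OF sp] by auto
    then show ?thesis unfolding I_def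
      using hm.I_bnd[OF hmi[OF i], of "lam i" c "(lam(j:=s')) i" "cf s'"] lpi[OF i] lpi'[OF i sp] cc by auto
  qed
  have Isum_nn: "0 < s' \<Longrightarrow> 0 \<le> (\<Sum>i<K. gam i * lam i * I s' i)" for s'
    by (intro sum_nonneg mult_nonneg_nonneg) (use gpos lpi Ibnd in \<open>auto intro: less_imp_le\<close>)
  have Ann: "0 \<le> (\<Sum>i<K. gam i * lam i * A i)"
    by (intro sum_nonneg mult_nonneg_nonneg)
       (use gpos lpi hm.I_bnd[OF hmi] cc in \<open>auto intro: less_imp_le simp: A_def\<close>)
  have E: "1 \<le> E" using Ann unfolding E_def by simp
  have did: "0 < s' \<Longrightarrow> (cf s' - c) * (1 + (\<Sum>i<K. gam i * lam i * I s' i)) = (s' - s0) * c * gam j * I s' j" for s'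
    using diffid[OF lp j, of s'] unfolding cf_def c_def I_def s0_def by simp
  have ev: "\<forall>\<^sub>F s' in at s0. 0 < s'"
    using order_tendstoD(1)[OF tendsto_ident_at s0] .
  have cbound: "0 < s' \<Longrightarrow> \<bar>cf s' - c\<bar> \<le> \<bar>s' - s0\<bar> * gam j * (h2 / (s' * s0))" for s'
  proof -
    assume sp: "0 < s'"
    define X where "X = 1 + (\<Sum>i<K. gam i * lam i * I s' i)"
    have X: "1 \<le> X" using Isum_nn[OF sp] unfolding X_def by simp
    have "\<bar>cf s' - c\<bar> \<le> \<bar>cf s' - c\<bar> * X" using X by (simp add: mult_le_cancel_left1)
    also have "\<dots> = \<bar>(cf s' - c) * X\<bar>" using X by (simp add: abs_mult)
    also have "\<dots> = \<bar>(s' - s0) * c * gam j * I s' j\<bar>" using did[OF sp] unfolding X_def by simp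
    also have "\<dots> = \<bar>s' - s0\<bar> * c * gam j * I s' j"
      using cc gj Ibnd[OF j sp] by (simp add: abs_mult)
    also have "\<dots> \<le> \<bar>s' - s0\<bar> * 1 * gam j * (h2 / (s' * s0))"
      using Ibnd[OF j sp] cc gpos j unfolding s0_def
      by (intro mult_mono) (auto intro: less_imp_le)
    finally show ?thesis by simp
  qed
  have cconv: "(cf \<longlongrightarrow> c) (at s0)"
  proof (rule LIM_zero_cancel, rule Lim_null_comparison)
    show "\<forall>\<^sub>F s' in at s0. norm (cf s' - c) \<le> \<bar>s' - s0\<bar> * gam j * (h2 / (s' * s0))"
      using ev by eventually_elim (use cbound in auto)
    have "((\<lambda>s'. \<bar>s' - s0\<bar> * gam j * (h2 / (s' * s0))) \<longlongrightarrow> \<bar>s0 - s0\<bar> * gam j * (h2 / (s0 * s0))) (at s0)"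
      using s0 by (intro tendsto_intros) auto
    then show "((\<lambda>s'. \<bar>s' - s0\<bar> * gam j * (h2 / (s' * s0))) \<longlongrightarrow> 0) (at s0)" by simp
  qed
  have Iconv: "((\<lambda>s'. I s' i) \<longlongrightarrow> A i) (at s0)" if i: "i < K" for i
  proof (rule LIM_zero_cancel, rule Lim_null_comparison)
    show "\<forall>\<^sub>F s' in at s0. norm (I s' i - A i) \<le> h2*(\<bar>(lam(j:=s')) i - lam i\<bar> + h2*\<bar>cf s' - c\<bar>)/((lam(j:=s')) i * lam i * lam i)"
      using ev
    proof eventually_elim
      case (elim s')
      show ?case unfolding I_def A_def using hm.I_conv[OF hmi[OF i], of "lam i" c "(lam(j:=s')) i" "cf s'"]
        lpi[OF i] lpi'[OF i elim] cc ccf[OF elim] by simp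
    qed
    have "((\<lambda>s'. h2*(\<bar>(lam(j:=s')) i - lam i\<bar> + h2*\<bar>cf s' - c\<bar>)/((lam(j:=s')) i * lam i * lam i)) \<longlongrightarrow>
        h2*(\<bar>lam i - lam i\<bar> + h2*\<bar>c - c\<bar>)/(lam i * lam i * lam i)) (at s0)"
      using lpi[OF i] unfolding s0_def by (intro tendsto_intros lamconv cconv[unfolded s0_def]) auto
    then show "((\<lambda>s'. h2*(\<bar>(lam(j:=s')) i - lam i\<bar> + h2*\<bar>cf s' - c\<bar>)/((lam(j:=s')) i * lam i * lam i)) \<longlongrightarrow> 0) (at s0)"
      by simp
  qed
  have Qconv: "(Q \<longlongrightarrow> - gam j * A j / (G * c * E)) (at s0)"
    unfolding Q_def E_def
    using Gpos cc E unfolding E_def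
    by (intro tendsto_intros Iconv j cconv) auto
  have eqQ: "\<forall>\<^sub>F s' in at s0. Q s' = (fsol K gam H (lam(j:=s')) - fsol K gam H (lam(j:=s0))) / (s' - s0)"
    using ev eventually_neq_at_within[of s0 s0 UNIV]
  proof eventually_elim
    case (elim s')
    then have sp: "0 < s'" and ne: "s' \<noteq> s0" by auto
    define X where "X = 1 + (\<Sum>i<K. gam i * lam i * I s' i)"
    have X: "1 \<le> X" using Isum_nn[OF sp] unfolding X_def by simp
    have dd: "(cf s' - c) * X = (s' - s0) * c * gam j * I s' j" using did[OF sp] unfolding X_def .
    have f1: "fsol K gam H (lam(j:=s')) = (1 / cf s' - 1) / G"
      unfolding cf_def by (rule fsol_eq[OF pos_upd[OF lp sp]])
    have f0: "fsol K gam H (lam(j:=s0)) = (1 / c - 1) / G"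
      unfolding c_def s0_def using fsol_eq[OF lp] by simp
    have cfp: "0 < cf s'" using ccf[OF sp] by auto
    have G0: "G \<noteq> 0" using Gpos by simp
    have "(fsol K gam H (lam(j:=s')) - fsol K gam H (lam(j:=s0))) / (s' - s0)
        = - ((cf s' - c) * X) / (G * c * cf s' * X * (s' - s0))"
      unfolding f1 f0 using cfp cc X G0 ne by (intro alg1) auto
    also have "\<dots> = - ((s' - s0) * c * gam j * I s' j) / (G * c * cf s' * X * (s' - s0))"
      unfolding dd ..
    also have "\<dots> = Q s'"
      unfolding Q_def X_def[symmetric] using cfp cc X G0 ne by (intro alg2) auto
    finally show ?case by simp
  qed
  have "((\<lambda>s. fsol K gam H (lam(j:=s))) has_field_derivative (- gam j * A j / (G * c * E))) (at s0)"
    unfolding has_field_derivative_iff by (rule Lim_transform_eventually[OF Qconv eqQ])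
  then have "deriv (\<lambda>s. fsol K gam H (lam(j:=s))) s0 = - gam j * A j / (G * c * E)"
    by (rule DERIV_imp_deriv)
  then show ?thesis unfolding s0_def A_def E_def c_def .
qed

end

context setting
begin

definition "Aq lam i = iI (H i) (lam i) (croot K gam H lam) (lam i) (croot K gam H lam)"
definition "Eq lam = 1 + (\<Sum>i<K. gam i * lam i * Aq lam i)"

lemma Aq_nn: "pos lam \<Longrightarrow> i < K \<Longrightarrow> 0 \<le> Aq lam i"
  unfolding Aq_def using hm.I_bnd[OF hmi] croot unfolding pos_def by (meson less_imp_le)

lemma Eq_ge1: "pos lam \<Longrightarrow> 1 \<le> Eq lam"
proof -
  assume lp: "pos lam"
  have "0 \<le> (\<Sum>i<K. gam i * lam i * Aq lam i)"
    by (intro sum_nonneg mult_nonneg_nonneg) (use gpos lp Aq_nn[OF lp] in \<open>auto simp: pos_def intro: less_imp_le\<close>)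
  then show ?thesis unfolding Eq_def by simp
qed

lemma Rlim_form: assumes lp: "pos lam" and ap: "\<forall>g<K. alpha g > 0"
  shows "Rlim K gam alpha H lam = (1 + (\<Sum>j<K. (alpha j)^2 * lam j * lam j * Aq lam j)) / (croot K gam H lam * Eq lam)"
proof -
  define c where "c = croot K gam H lam"
  have cc: "0 < c" using croot[OF lp] c_def by auto
  have E: "1 \<le> Eq lam" by (rule Eq_ge1[OF lp])
  have G: "0 < G" by (rule Gpos)
  have f: "fsol K gam H lam = (1/c - 1)/G" using fsol_eq[OF lp] c_def by simp
  have trm: "gamma_tot K gam / gam j * (gam j * lam j - (alpha j)^2 * (lam j)^2) * deriv (\<lambda>s. fsol K gam H (lam(j := s))) (lam j)
     = ((alpha j)^2 * lam j * lam j * Aq lam j - gam j * lam j * Aq lam j) / (c * Eq lam)" if j: "j < K" for j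
  proof -
    have d: "deriv (\<lambda>s. fsol K gam H (lam(j := s))) (lam j) = - gam j * Aq lam j / (G * c * Eq lam)"
      using deriv_fsol[OF lp j] unfolding Aq_def Eq_def c_def by simp
    have gj: "gam j \<noteq> 0" using gpos j by auto
    show ?thesis unfolding d using gj G cc E by (simp add: field_simps power2_eq_square)
  qed
  have "Rlim K gam alpha H lam = 1 + G * ((1/c - 1)/G) + (\<Sum>j<K. ((alpha j)^2 * lam j * lam j * Aq lam j - gam j * lam j * Aq lam j) / (c * Eq lam))"
    unfolding Rlim_def f using trm by simp
  also have "\<dots> = 1/c + ((\<Sum>j<K. (alpha j)^2 * lam j * lam j * Aq lam j) - (Eq lam - 1)) / (c * Eq lam)"
    using G unfolding Eq_def by (simp add: sum_divide_distrib[symmetric] sum_subtractf)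
  also have "\<dots> = (1 + (\<Sum>j<K. (alpha j)^2 * lam j * lam j * Aq lam j)) / (c * Eq lam)"
    using cc E by (simp add: field_simps)
  finally show ?thesis unfolding c_def .
qed

lemma cE_id: assumes lp: "pos lam"
  shows "croot K gam H lam * Eq lam = 1 - (croot K gam H lam)^2 * (\<Sum>i<K. gam i * iB (H i) (lam i) (croot K gam H lam))"
proof -
  define c where "c = croot K gam H lam"
  have cc: "0 < c" "1 - c = Tsum K gam H lam c" using croot[OF lp] c_def by auto
  have "Tsum K gam H lam c = (\<Sum>i<K. gam i * (c * lam i * Aq lam i + c * c * iB (H i) (lam i) c))"
    unfolding Tsum_def Aq_def c_def[symmetric]
    by (rule sum.cong) (use hm.T_dec[OF hmi] lp cc in \<open>auto simp: pos_def\<close>)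
  also have "\<dots> = c * (\<Sum>i<K. gam i * lam i * Aq lam i) + c^2 * (\<Sum>i<K. gam i * iB (H i) (lam i) c)"
    by (simp add: sum_distrib_left sum.distrib algebra_simps power2_eq_square)
  finally show ?thesis using cc unfolding Eq_def c_def[symmetric] by (simp add: algebra_simps)
qed

lemma main_ineq: assumes lp: "pos lam" and ap: "\<forall>g<K. alpha g > 0"
  defines "r \<equiv> Rlim K gam alpha H lam"
  shows "0 < r \<and> 1 + r * (\<Sum>j<K. iN (H j) ((alpha j)^2) (gam j) r) \<le> r"
proof -
  define c where "c = croot K gam H lam"
  define NUM where "NUM = 1 + (\<Sum>j<K. (alpha j)^2 * lam j * lam j * Aq lam j)"
  have cc: "0 < c" using croot[OF lp] c_def by auto
  have E: "1 \<le> Eq lam" by (rule Eq_ge1[OF lp])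
  have lpi: "i < K \<Longrightarrow> 0 < lam i" for i using lp unfolding pos_def by auto
  have NUM: "1 \<le> NUM" unfolding NUM_def
    by (simp, intro sum_nonneg mult_nonneg_nonneg) (use Aq_nn[OF lp] lpi in \<open>auto intro: less_imp_le\<close>)
  have rf: "r = NUM / (c * Eq lam)" unfolding r_def NUM_def c_def by (rule Rlim_form[OF lp ap])
  have rpos: "0 < r" unfolding rf using NUM cc E by simp
  have "r * (c * Eq lam) = NUM" unfolding rf using cc E by simp
  then have "r * (1 - c^2 * (\<Sum>i<K. gam i * iB (H i) (lam i) c)) = NUM"
    using cE_id[OF lp] unfolding c_def by simp
  then have "r = NUM + r * c^2 * (\<Sum>i<K. gam i * iB (H i) (lam i) c)" by (simp add: algebra_simps)
  also have "\<dots> = 1 + (\<Sum>j<K. (alpha j)^2 * lam j * lam j * iI (H j) (lam j) c (lam j) c + r * gam j * c * c * iB (H j) (lam j) c)"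
    unfolding NUM_def Aq_def c_def[symmetric]
    by (simp add: sum.distrib sum_distrib_left algebra_simps power2_eq_square)
  also have "\<dots> \<ge> 1 + (\<Sum>j<K. r * iN (H j) ((alpha j)^2) (gam j) r)"
    using hm.N_ineq[OF hmi] lpi cc rpos gpos ap by (intro add_left_mono sum_mono) auto
  finally show ?thesis using rpos by (simp add: sum_distrib_left)
qed

lemma star_eq: assumes ap: "\<forall>g<K. alpha g > 0"
  defines "ls \<equiv> (\<lambda>g. gam g / (alpha g)^2)"
  shows "Rlim K gam alpha H ls = 1 + gamma_tot K gam * fsol K gam H ls"
proof -
  have "(\<Sum>j<K. gamma_tot K gam / gam j * (gam j * ls j - (alpha j)^2 * (ls j)^2)
                * deriv (\<lambda>s. fsol K gam H (ls(j := s))) (ls j)) = 0"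
  proof (rule sum.neutral, rule ballI)
    fix j assume "j \<in> {..<K}"
    then have "alpha j \<noteq> 0" using ap by auto
    then have "gam j * ls j - (alpha j)^2 * (ls j)^2 = 0" unfolding ls_def by (simp add: power2_eq_square field_simps)
    then show "gamma_tot K gam / gam j * (gam j * ls j - (alpha j)^2 * (ls j)^2) * deriv (\<lambda>s. fsol K gam H (ls(j := s))) (ls j) = 0"
      by simp
  qed
  then show ?thesis unfolding Rlim_def by simp
qed

lemma star_fix: assumes ap: "\<forall>g<K. alpha g > 0"
  defines "ls \<equiv> (\<lambda>g. gam g / (alpha g)^2)"
  defines "rs \<equiv> Rlim K gam alpha H ls"
  shows "0 < rs \<and> rs = 1 + rs * (\<Sum>j<K. iN (H j) ((alpha j)^2) (gam j) rs)"
proof -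
  have lp: "pos ls" unfolding pos_def ls_def using gpos ap by auto
  define c where "c = croot K gam H ls"
  have cc: "0 < c" "1 - c = Tsum K gam H ls c" using croot[OF lp] c_def by auto
  have G: "0 < G" by (rule Gpos)
  have "rs = 1 + G * fsol K gam H ls" unfolding rs_def ls_def by (rule star_eq[OF ap])
  also have "fsol K gam H ls = (1/c - 1)/G" using fsol_eq[OF lp] unfolding c_def .
  finally have rs: "rs = 1/c" using G by simp
  have "rs * (\<Sum>j<K. iN (H j) ((alpha j)^2) (gam j) rs) = (\<Sum>j<K. gam j * iS (H j) (gam j / (alpha j)^2) c)"
    unfolding sum_distrib_left rs
  proof (rule sum.cong)
    fix j assume "j \<in> {..<K}"
    then have j: "j < K" by simp
    have "0 < alpha j" using ap j by simp
    then have "0 < (alpha j)^2" by simp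
    then show "1 / c * iN (H j) ((alpha j)\<^sup>2) (gam j) (1 / c) = gam j * iS (H j) (gam j / (alpha j)\<^sup>2) c"
      using hm.N_star[OF hmi[OF j] cc(1), of "(alpha j)^2" "gam j"] gpos j by simp
  qed simp
  also have "\<dots> = Tsum K gam H ls c / c" unfolding Tsum_S ls_def using cc by simp
  also have "\<dots> = rs - 1" unfolding cc(2)[symmetric] rs using cc(1) by (simp add: diff_divide_distrib)
  finally show ?thesis using rs cc by simp
qed

lemma optimal: assumes ap: "\<forall>g<K. alpha g > 0" and lp: "pos lam"
  shows "Rlim K gam alpha H (\<lambda>g. gam g / (alpha g)^2) \<le> Rlim K gam alpha H lam"
proof (rule ccontr)
  define rs where "rs = Rlim K gam alpha H (\<lambda>g. gam g / (alpha g)^2)"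
  define r where "r = Rlim K gam alpha H lam"
  assume "\<not> ?thesis"
  then have lt: "r < rs" unfolding r_def rs_def by simp
  have s: "0 < rs" "rs = 1 + rs * (\<Sum>j<K. iN (H j) ((alpha j)^2) (gam j) rs)"
    using star_fix[OF ap] unfolding rs_def by auto
  have m: "0 < r" "1 + r * (\<Sum>j<K. iN (H j) ((alpha j)^2) (gam j) r) \<le> r"
    using main_ineq[OF lp ap] unfolding r_def by auto
  define P where "P = (\<Sum>j<K. iN (H j) ((alpha j)^2) (gam j) rs)"
  have "P \<le> (\<Sum>j<K. iN (H j) ((alpha j)^2) (gam j) r)"
    unfolding P_def using hm.N_mono[OF hmi] m(1) lt gpos ap by (intro sum_mono) auto
  then have "1 + r * P \<le> r" using m mult_left_mono[of P _ r] by (smt (verit))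
  moreover have "rs * (1 - P) = 1" using s unfolding P_def by (simp add: algebra_simps)
  ultimately have "r * (1 - P) \<ge> rs * (1 - P)" by (simp add: algebra_simps)
  moreover have "0 < 1 - P" using \<open>rs * (1 - P) = 1\<close> s(1) by (metis zero_less_mult_pos zero_less_one)
  ultimately have "rs \<le> r" by simp
  then show False using lt by simp
qed

end

theorem corollary1:
  fixes K :: nat and gam alpha :: "nat \<Rightarrow> real" and H :: "nat \<Rightarrow> real measure"
    and h1 h2 :: real
  assumes "K \<ge> 1"
    and "\<forall>g<K. gam g > 0"
    and "\<forall>g<K. alpha g > 0"
    and "0 < h1" and "h1 \<le> h2"
    and "\<forall>g<K. prob_space (H g)"
    and "\<forall>g<K. sets (H g) = sets borel"
    and "\<forall>g<K. measure (H g) {h1..h2} = 1"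
  shows "(\<forall>lam. (\<forall>g<K. lam g > 0) \<longrightarrow>
            Rlim K gam alpha H (\<lambda>g. gam g / (alpha g)^2) \<le> Rlim K gam alpha H lam)
         \<and> Rlim K gam alpha H (\<lambda>g. gam g / (alpha g)^2)
             = 1 + gamma_tot K gam * fsol K gam H (\<lambda>g. gam g / (alpha g)^2)"
proof -
  interpret setting K gam H h1 h2 using assms unfolding setting_def by auto
  show ?thesis using optimal[OF assms(3)] star_eq[OF assms(3)] unfolding pos_def by auto
qed

end
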